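(* Let $\gamma\in(2/3,1)$ and consider the TBRW started at a finite initial condition $(T,x)$ with $\mathcal L_n=\mathrm{Ber}(n^{-\gamma})$. Then for every $\varepsilon<\frac{\gamma}{1-\gamma}-2$, \[ \mathbb P_{T,x;\mathcal L}\big(\Delta\tau_i<i^{1+\varepsilon}\text{ for infinitely many } i\big)=0 . \]
   Context: Tree Builder Random Walk (TBRW). Let $\mathcal L=(\mathcal L_n)_{n\ge1}$ be a sequence of probability laws on $\{0,1,2,\dots\}$ and let $(T_0,x_0)$ be an initial condition: $T_0$ is a finite rooted tree with a single self-loop attached at its root, and $x_0$ is a vertex of $T_0$. Let $(Z_n)_{n\ge1}$ be independent random variables with $Z_n\sim\mathcal L_n$. The TBRW is the process $((T_n,X_n))_{n\ge0}$ with $(T_0,X_0)=(T_0,x_0)$ where, for $n\ge1$, $T_n$ is obtained from $T_{n-1}$ by attaching $Z_n$ new leaves to $X_{n-1}$, and then $X_n$ is obtained by one step of simple random walk on $T_n$ from $X_{n-1}$ (self-loop counted twice in degrees; moves along a uniformly chosen edge-end). Its law is $\mathbb P_{T_0,x_0;\mathcal L}$. Growth times: $\tau_0=0$, $\tau_k=\inf\{n>\tau_{k-1}:Z_n\ge1\}$; $\Delta\tau_k=\tau_{k+1}-\tau_k$. *)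

theory Defs
  imports "HOL-Probability.Probability"
begin

text \<open>Growth times of the TBRW, determined by the leaf-count sequence Z:
  tau 0 = 0 and tau (k+1) = least n > tau k with Z n >= 1.
  (If no such n exists, LEAST returns an unspecified value; this happens
  only on a null event under the hypotheses of the theorem.)\<close>
fun growth_time :: "(nat \<Rightarrow> nat) \<Rightarrow> nat \<Rightarrow> nat" where
  "growth_time Z 0 = 0"
| "growth_time Z (Suc k) = (LEAST n. growth_time Z k < n \<and> 1 \<le> Z n)"

definition delta_growth_time :: "(nat \<Rightarrow> nat) \<Rightarrow> nat \<Rightarrow> nat" where
  "delta_growth_time Z k = growth_time Z (Suc k) - growth_time Z k"

definition ber_nat :: "real \<Rightarrow> nat pmf" where
  "ber_nat p = map_pmf (\<lambda>b. if b then 1 else 0) (bernoulli_pmf p)"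

end

theory Submission
  imports Defs
begin

lemma powr_sum_bound:
  fixes g :: real assumes g0: "0 < g" and g1: "g < 1"
  shows "(\<Sum>n=1..m. real n powr (-g)) \<le> real m powr (1 - g) / (1 - g)"
proof (induction m)
  case 0 then show ?case by simp
next
  case (Suc m)
  have step: "(1 - g) * real (Suc m) powr (-g) \<le> real (Suc m) powr (1 - g) - real m powr (1 - g)"
  proof (cases "m = 0")
    case True then show ?thesis using g0 g1 by simp
  next
    case False
    have "\<exists>z. real m < z \<and> z < real m + 1 \<and>
      ((real m + 1) powr (1 - g) - real m powr (1 - g) = (real m + 1 - real m) * ((1 - g) * z powr (1 - g - 1)))"
      by (rule MVT2) (use False has_real_derivative_powr[of _ "1 - g"] in auto)
    then obtain z where z: "real m < z" "z < real m + 1"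
      "(real m + 1) powr (1 - g) - real m powr (1 - g) = (1 - g) * z powr (-g)" by auto
    have "real (Suc m) powr (-g) \<le> z powr (-g)"
      using z False g0 by (intro powr_mono2') auto
    then show ?thesis using z g1 by (simp add: add.commute)
  qed
  have "(\<Sum>n=1..Suc m. real n powr (-g)) = (\<Sum>n=1..m. real n powr (-g)) + real (Suc m) powr (-g)"
    by simp
  also have "\<dots> \<le> real m powr (1 - g) / (1 - g) + real (Suc m) powr (-g)" using Suc by simp
  also have "\<dots> \<le> real (Suc m) powr (1 - g) / (1 - g)"
  proof -
    have "real (Suc m) powr (-g) \<le> (real (Suc m) powr (1 - g) - real m powr (1 - g)) / (1 - g)"
      using step g1 by (simp add: pos_le_divide_eq mult.commute)
    moreover have "real m powr (1 - g) / (1 - g) + (real (Suc m) powr (1 - g) - real m powr (1 - g)) / (1 - g)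
       = real (Suc m) powr (1 - g) / (1 - g)" by (simp add: diff_divide_distrib)
    ultimately show ?thesis by linarith
  qed
  finally show ?case .
qed

locale tbrw = prob_space +
  fixes Z :: "nat \<Rightarrow> 'a \<Rightarrow> nat" and \<gamma> :: real
  assumes g0: "0 < \<gamma>" and g1: "\<gamma> < 1"
    and ind: "indep_vars (\<lambda>_. count_space UNIV) Z {1..}"
    and dist: "\<And>n. 1 \<le> n \<Longrightarrow>
           distr M (count_space UNIV) (Z n) = measure_pmf (ber_nat (real n powr (-\<gamma>)))"
begin

lemma rv: "1 \<le> n \<Longrightarrow> Z n \<in> measurable M (count_space UNIV)"
  using ind unfolding indep_vars_def by auto

lemma ev_pos[measurable]: "1 \<le> n \<Longrightarrow> {\<omega>\<in>space M. 1 \<le> Z n \<omega>} \<in> events"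
  using rv[of n] by measurable

lemma p_range: "1 \<le> n \<Longrightarrow> 0 \<le> real n powr (-\<gamma>) \<and> real n powr (-\<gamma>) \<le> 1"
  using g0 by (auto intro!: ge_one_powr_ge_zero simp: powr_minus divide_simps)

lemma prob_pos: assumes "1 \<le> n" shows "prob {\<omega>\<in>space M. 1 \<le> Z n \<omega>} = real n powr (-\<gamma>)"
proof -
  have "prob {\<omega>\<in>space M. 1 \<le> Z n \<omega>} = measure (distr M (count_space UNIV) (Z n)) {k. 1 \<le> k}"
    using rv[OF assms] by (subst measure_distr) (auto simp: vimage_def Int_def conj_commute)
  also have "\<dots> = measure_pmf.prob (bernoulli_pmf (real n powr (-\<gamma>))) {True}"
    unfolding dist[OF assms] ber_nat_def measure_map_pmf
    by (rule arg_cong[where f="measure_pmf.prob _"]) auto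
  also have "\<dots> = real n powr (-\<gamma>)" using p_range[OF assms] by (simp add: measure_pmf_single)
  finally show ?thesis .
qed

lemma prob_zero: assumes "1 \<le> n" shows "prob {\<omega>\<in>space M. Z n \<omega> = 0} = 1 - real n powr (-\<gamma>)"
proof -
  have "{\<omega>\<in>space M. Z n \<omega> = 0} = space M - {\<omega>\<in>space M. 1 \<le> Z n \<omega>}" by auto
  then show ?thesis using prob_pos[OF assms] ev_pos[OF assms] by (simp add: prob_compl)
qed


lemma indep_prod:
  assumes "finite J" "J \<noteq> {}" "J \<subseteq> {1..}"
  shows "prob (\<Inter>j\<in>J. {\<omega>\<in>space M. Z j \<omega> \<in> A j}) = (\<Prod>j\<in>J. prob {\<omega>\<in>space M. Z j \<omega> \<in> A j})"
proof -
  have I: "indep_sets (\<lambda>i. {Z i -` B \<inter> space M | B. B \<in> sets (count_space UNIV)}) {1..}"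
    using ind unfolding indep_vars_def2 by auto
  have eq: "\<And>j. {\<omega>\<in>space M. Z j \<omega> \<in> A j} = Z j -` A j \<inter> space M" by auto
  show ?thesis unfolding eq
    by (rule indep_setsD[OF I assms(3,2,1)]) auto
qed

lemma prob_both:
  assumes "1 \<le> m" "m < m'"
  shows "prob {\<omega>\<in>space M. 1 \<le> Z m \<omega> \<and> 1 \<le> Z m' \<omega>} = real m powr (-\<gamma>) * real m' powr (-\<gamma>)"
proof -
  have "{\<omega>\<in>space M. 1 \<le> Z m \<omega> \<and> 1 \<le> Z m' \<omega>} = (\<Inter>j\<in>{m,m'}. {\<omega>\<in>space M. Z j \<omega> \<in> {1..}})"
    using assms by auto
  also have "prob \<dots> = (\<Prod>j\<in>{m,m'}. prob {\<omega>\<in>space M. Z j \<omega> \<in> {1..}})"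
    using assms by (intro indep_prod) auto
  also have "\<dots> = real m powr (-\<gamma>) * real m' powr (-\<gamma>)"
    using assms prob_pos[of m] prob_pos[of m'] by simp
  finally show ?thesis .
qed

lemma prob_none:
  assumes "2 \<le> n" "n \<le> N"
  shows "prob (\<Inter>j\<in>{n..N}. {\<omega>\<in>space M. Z j \<omega> = 0}) \<le> (real n - 1) / real N"
proof -
  have "prob (\<Inter>j\<in>{n..N}. {\<omega>\<in>space M. Z j \<omega> = 0}) = (\<Prod>j\<in>{n..N}. prob {\<omega>\<in>space M. Z j \<omega> \<in> {0}})"
    using assms indep_prod[of "{n..N}" "\<lambda>_. {0}"] by simp
  also have "\<dots> = (\<Prod>j\<in>{n..N}. 1 - real j powr (-\<gamma>))"
    using assms by (intro prod.cong refl) (simp add: prob_zero)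
  also have "\<dots> \<le> (\<Prod>j\<in>{n..N}. 1 - 1 / real j)"
  proof (rule prod_mono)
    fix j assume j: "j \<in> {n..N}"
    then have j1: "1 \<le> real j" using assms by auto
    have "real j powr (-\<gamma>) \<ge> real j powr (-1)"
      using j1 g1 by (intro powr_mono) auto
    then show "0 \<le> 1 - real j powr (-\<gamma>) \<and> 1 - real j powr (-\<gamma>) \<le> 1 - 1 / real j"
      using p_range[of j] j assms by (auto simp: powr_minus_divide)
  qed
  also have "\<dots> = (real n - 1) / real N"
    using assms(2)
  proof (induction N rule: dec_induct)
    case base
    then show ?case using assms by (simp add: field_simps)
  next
    case (step k)
    have "{n..Suc k} = insert (Suc k) {n..k}" using step by auto
    moreover have "real k > 0" using step assms by auto
    then show ?case using step by (simp add: field_simps)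
  qed
  finally show ?thesis .
qed


lemma inf_growth: "AE \<omega> in M. \<forall>n. \<exists>m>n. 1 \<le> Z m \<omega>"
proof -
  have "AE \<omega> in M. \<exists>m>n. 1 \<le> Z m \<omega>" for n
  proof -
    define E where "E = (\<Inter>j\<in>{n+2..}. {\<omega>\<in>space M. Z j \<omega> = 0})"
    have Esets: "E \<in> events" unfolding E_def
    proof (intro sets.countable_INT')
      show "(\<lambda>j. {\<omega> \<in> space M. Z j \<omega> = 0}) ` {n + 2..} \<subseteq> events"
      proof
        fix A assume "A \<in> (\<lambda>j. {\<omega> \<in> space M. Z j \<omega> = 0}) ` {n + 2..}"
        then obtain j where j: "j \<ge> n+2" "A = {\<omega> \<in> space M. Z j \<omega> = 0}" by auto
        have "Z j \<in> measurable M (count_space UNIV)" using rv[of j] j by auto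
        then show "A \<in> events" unfolding j by measurable
      qed
    qed auto
    have bound: "prob E \<le> (real (n+2) - 1) / real N" if "n+2 \<le> N" for N
    proof -
      have "prob E \<le> prob (\<Inter>j\<in>{n+2..N}. {\<omega>\<in>space M. Z j \<omega> = 0})"
      proof (rule finite_measure_mono)
        show "E \<subseteq> (\<Inter>j\<in>{n+2..N}. {\<omega>\<in>space M. Z j \<omega> = 0})" unfolding E_def by auto
        show "(\<Inter>j\<in>{n+2..N}. {\<omega>\<in>space M. Z j \<omega> = 0}) \<in> events"
        proof (intro sets.finite_INT)
          fix j assume "j \<in> {n+2..N}"
          then have "Z j \<in> measurable M (count_space UNIV)" using rv[of j] by auto
          then show "{\<omega>\<in>space M. Z j \<omega> = 0} \<in> events" by measurable
        qed (use that in auto)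
      qed
      also have "\<dots> \<le> (real (n+2) - 1) / real N" using prob_none[of "n+2" N] that by auto
      finally show ?thesis .
    qed
    have "prob E \<le> 0"
    proof (rule ccontr)
      assume "\<not> prob E \<le> 0"
      then have pos: "prob E > 0" by auto
      obtain N :: nat where N: "N > (real n + 2) / prob E" "N \<ge> n + 2"
        using reals_Archimedean2[of "(real n + 2) / prob E"]
        by (metis (no_types, opaque_lifting) le_cases less_le_trans nat_le_real_less of_nat_le_iff)
      then have "(real n + 2) < N * prob E" using pos by (simp add: field_simps)
      moreover have "prob E \<le> (real n + 1) / real N" using bound[OF N(2)] by (simp add: add.commute)
      then have "prob E * N \<le> real n + 1" using N pos by (simp add: field_simps)
      ultimately show False by (simp add: mult.commute)
    qed
    then have "E \<in> null_sets M" using Esets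
      by (simp add: measure_le_0_iff null_setsI emeasure_eq_measure)
    then show ?thesis
    proof (rule AE_I')
      show "{\<omega> \<in> space M. \<not> (\<exists>m>n. 1 \<le> Z m \<omega>)} \<subseteq> E" unfolding E_def by (auto simp: not_le Suc_le_eq)
    qed
  qed
  then show ?thesis by (simp add: AE_all_countable)
qed


lemma bc_finite:
  assumes "\<And>n. A n \<in> events" "summable (\<lambda>n. prob (A n))"
  shows "AE \<omega> in M. finite {n. \<omega> \<in> A n}"
proof -
  have "AE \<omega> in M. eventually (\<lambda>n. \<omega> \<in> space M - A n) sequentially"
    by (rule borel_cantelli_AE1) (use assms in \<open>auto simp: less_top[symmetric]\<close>)
  then show ?thesis
  proof (rule AE_mp, intro AE_I2 impI)
    fix \<omega> assume "eventually (\<lambda>n. \<omega> \<in> space M - A n) sequentially"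
    then obtain N where "\<forall>n\<ge>N. \<omega> \<notin> A n" by (auto simp: eventually_sequentially)
    then have "{n. \<omega> \<in> A n} \<subseteq> {..<N}" by (auto simp: not_le[symmetric])
    then show "finite {n. \<omega> \<in> A n}" by (rule finite_subset) auto
  qed
qed

lemma ev_both: "1 \<le> m \<Longrightarrow> 1 \<le> m' \<Longrightarrow> {\<omega>\<in>space M. 1 \<le> Z m \<omega> \<and> 1 \<le> Z m' \<omega>} \<in> events"
  using rv[of m] rv[of m'] by measurable

definition Bset :: "real \<Rightarrow> nat \<Rightarrow> 'a set" where
  "Bset b m = {\<omega>\<in>space M. 1 \<le> Z m \<omega>} \<inter> (\<Union>m'\<in>{m<..<m + nat \<lceil>(2 * real m) powr b\<rceil>}. {\<omega>\<in>space M. 1 \<le> Z m' \<omega>})"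

lemma Bset_sets: "1 \<le> m \<Longrightarrow> Bset b m \<in> events"
  unfolding Bset_def
  by (intro sets.Int ev_pos sets.finite_UN) auto

lemma Bset_prob: assumes "1 \<le> m" "0 \<le> b" shows "prob (Bset b m) \<le> 2 powr b * real m powr (b - 2 * \<gamma>)"
proof -
  define D where "D = {m<..<m + nat \<lceil>(2 * real m) powr b\<rceil>}"
  have eqB: "Bset b m = (\<Union>m'\<in>D. {\<omega>\<in>space M. 1 \<le> Z m \<omega> \<and> 1 \<le> Z m' \<omega>})"
    unfolding Bset_def D_def by auto
  have "prob (Bset b m) \<le> (\<Sum>m'\<in>D. prob {\<omega>\<in>space M. 1 \<le> Z m \<omega> \<and> 1 \<le> Z m' \<omega>})"
    unfolding eqB
  proof (intro finite_measure_subadditive_finite)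
    show "finite D" unfolding D_def by simp
    show "(\<lambda>m'. {\<omega>\<in>space M. 1 \<le> Z m \<omega> \<and> 1 \<le> Z m' \<omega>}) ` D \<subseteq> events"
    proof (rule image_subsetI)
      fix m' assume "m' \<in> D"
      then have "1 \<le> m'" using assms unfolding D_def by auto
      then show "{\<omega>\<in>space M. 1 \<le> Z m \<omega> \<and> 1 \<le> Z m' \<omega>} \<in> events"
        using ev_both[OF assms(1)] by blast
    qed
  qed
  also have "\<dots> \<le> (\<Sum>m'\<in>D. real m powr (-\<gamma>) * real m powr (-\<gamma>))"
  proof (rule sum_mono)
    fix m' assume "m' \<in> D"
    then have mm: "m < m'" unfolding D_def by auto
    have "real m' powr (-\<gamma>) \<le> real m powr (-\<gamma>)"
      using mm assms g0 by (intro powr_mono2') auto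
    then show "prob {\<omega>\<in>space M. 1 \<le> Z m \<omega> \<and> 1 \<le> Z m' \<omega>} \<le> real m powr (-\<gamma>) * real m powr (-\<gamma>)"
      using prob_both[OF assms(1) mm] by (simp add: mult_left_mono)
  qed
  also have "\<dots> = real (card D) * real m powr (- 2 * \<gamma>)"
  proof -
    have "real m powr (-\<gamma>) * real m powr (-\<gamma>) = real m powr (-\<gamma> + -\<gamma>)"
      by (rule powr_add[symmetric])
    then show ?thesis by simp
  qed
  also have "\<dots> \<le> (2 * real m) powr b * real m powr (- 2 * \<gamma>)"
  proof (rule mult_right_mono)
    have "card D = nat \<lceil>(2 * real m) powr b\<rceil> - 1" unfolding D_def by simp
    then show "real (card D) \<le> (2 * real m) powr b"
    proof -
      have x0: "0 \<le> (2 * real m) powr b" by simp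
      have "real (nat \<lceil>(2 * real m) powr b\<rceil> - 1) \<le> real (nat \<lceil>(2 * real m) powr b\<rceil>) - 1 \<or> nat \<lceil>(2 * real m) powr b\<rceil> = 0"
        by (cases "nat \<lceil>(2 * real m) powr b\<rceil>") auto
      moreover have "real (nat \<lceil>(2 * real m) powr b\<rceil>) = of_int \<lceil>(2 * real m) powr b\<rceil>"
        using x0 by simp
      moreover have "of_int \<lceil>(2 * real m) powr b\<rceil> < (2 * real m) powr b + 1"
        using ceiling_correct[of "(2 * real m) powr b"] by linarith
      ultimately show ?thesis using x0 \<open>card D = _\<close> by auto
    qed
  qed auto
  also have "\<dots> = 2 powr b * real m powr (b - 2 * \<gamma>)"
  proof -
    have "(2 * real m) powr b = 2 powr b * real m powr b" using powr_mult[of 2 "real m" b] by simp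
    moreover have "real m powr (b - 2 * \<gamma>) = real m powr b * real m powr (- 2 * \<gamma>)"
      by (subst powr_add[symmetric]) simp
    ultimately show ?thesis by simp
  qed
  finally show ?thesis .
qed


lemma P3:
  assumes "0 \<le> b" "b - 2 * \<gamma> < -1"
  shows "AE \<omega> in M. finite {m. 1 \<le> m \<and> \<omega> \<in> Bset b m}"
proof -
  have sg: "summable (\<lambda>n. 2 powr b * real n powr (b - 2 * \<gamma>))"
    using assms summable_real_powr_iff[of "b - 2 * \<gamma>"] by (intro summable_mult) auto
  then have sg': "summable (\<lambda>n. 2 powr b * real (Suc n) powr (b - 2 * \<gamma>))"
    using summable_Suc_iff[where f="\<lambda>n. 2 powr b * real n powr (b - 2 * \<gamma>)"] by simp
  have "summable (\<lambda>n. prob (Bset b (Suc n)))"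
    by (rule summable_comparison_test'[OF sg', of 0]) (use Bset_prob[of "Suc _" b] assms in \<open>auto simp: add.commute\<close>)
  then have "AE \<omega> in M. finite {n. \<omega> \<in> Bset b (Suc n)}"
    by (intro bc_finite Bset_sets) auto
  then show ?thesis
  proof (rule AE_mp, intro AE_I2 impI)
    fix \<omega> assume "finite {n. \<omega> \<in> Bset b (Suc n)}"
    then have "finite (Suc ` {n. \<omega> \<in> Bset b (Suc n)})" by simp
    moreover have "{m. 1 \<le> m \<and> \<omega> \<in> Bset b m} \<subseteq> Suc ` {n. \<omega> \<in> Bset b (Suc n)}"
    proof
      fix m assume "m \<in> {m. 1 \<le> m \<and> \<omega> \<in> Bset b m}"
      then show "m \<in> Suc ` {n. \<omega> \<in> Bset b (Suc n)}"
        by (cases m) auto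
    qed
    ultimately show "finite {m. 1 \<le> m \<and> \<omega> \<in> Bset b m}" by (rule finite_subset[rotated])
  qed
qed


definition U :: "nat \<Rightarrow> 'a \<Rightarrow> real" where
  "U m \<omega> = (\<Sum>n\<in>{1..m}. indicator {\<omega>\<in>space M. 1 \<le> Z n \<omega>} \<omega>)"

lemma U_card: "\<omega> \<in> space M \<Longrightarrow> U m \<omega> = real (card {n\<in>{1..m}. 1 \<le> Z n \<omega>})"
proof -
  assume w: "\<omega> \<in> space M"
  have "U m \<omega> = (\<Sum>n\<in>{1..m}. if 1 \<le> Z n \<omega> then 1 else 0)"
    unfolding U_def using w by (intro sum.cong) (auto simp: indicator_def)
  also have "\<dots> = (\<Sum>n\<in>{n\<in>{1..m}. 1 \<le> Z n \<omega>}. 1)"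
    by (rule sum.inter_filter[symmetric]) simp
  finally show ?thesis by simp
qed

lemma U_int: "integrable M (U m)" "expectation (U m) = (\<Sum>n=1..m. real n powr (-\<gamma>))"
proof -
  have ii: "integrable M (indicator {\<omega>\<in>space M. 1 \<le> Z n \<omega>} :: 'a \<Rightarrow> real)" if "n \<in> {1..m}" for n
    using that ev_pos[of n] by (intro integrable_real_indicator) (auto simp: less_top[symmetric])
  show "integrable M (U m)" unfolding U_def by (rule Bochner_Integration.integrable_sum[where f="\<lambda>n. indicator {\<omega>\<in>space M. 1 \<le> Z n \<omega>}"]) (rule ii)
  have "expectation (U m) = (\<Sum>n\<in>{1..m}. expectation (indicator {\<omega>\<in>space M. 1 \<le> Z n \<omega>}))"
    unfolding U_def by (rule Bochner_Integration.integral_sum[where f="\<lambda>n. indicator {\<omega>\<in>space M. 1 \<le> Z n \<omega>}"]) (rule ii)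
  also have "\<dots> = (\<Sum>n=1..m. real n powr (-\<gamma>))"
  proof (rule sum.cong)
    fix n assume "n \<in> {1..m}"
    then have "1 \<le> n" by auto
    have "{\<omega>\<in>space M. 1 \<le> Z n \<omega>} \<inter> space M = {\<omega>\<in>space M. 1 \<le> Z n \<omega>}" by auto
    then show "expectation (indicator {\<omega>\<in>space M. 1 \<le> Z n \<omega>}) = real n powr (-\<gamma>)"
      using prob_pos[OF \<open>1 \<le> n\<close>] by simp
  qed simp
  finally show "expectation (U m) = (\<Sum>n=1..m. real n powr (-\<gamma>))" .
qed

lemma U_nonneg: "0 \<le> U m \<omega>" unfolding U_def by (intro sum_nonneg) auto

lemma U_mono: "\<omega> \<in> space M \<Longrightarrow> m \<le> m' \<Longrightarrow> U m \<omega> \<le> U m' \<omega>"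
  unfolding U_def by (intro sum_mono2) auto

lemma markov_k:
  assumes "1 - \<gamma> < a"
  shows "prob {\<omega>\<in>space M. 2 powr (real k * a) \<le> U (2^k) \<omega>} \<le> (2 powr (1 - \<gamma> - a))^k / (1 - \<gamma>)"
proof -
  have "prob {\<omega>\<in>space M. 2 powr (real k * a) \<le> U (2^k) \<omega>} \<le> expectation (U (2^k)) / 2 powr (real k * a)"
    by (rule integral_Markov_inequality_measure[OF U_int(1), of "space M"]) (auto simp: U_nonneg)
  also have "\<dots> \<le> (real (2^k) powr (1 - \<gamma>) / (1 - \<gamma>)) / 2 powr (real k * a)"
    unfolding U_int(2) using powr_sum_bound[OF g0 g1, of "2^k"]
    by (intro divide_right_mono) auto
  also have "\<dots> = (2 powr (1 - \<gamma> - a))^k / (1 - \<gamma>)"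
  proof -
    have "real (2^k) powr (1 - \<gamma>) = 2 powr (real k * (1 - \<gamma>))"
      by (simp add: powr_realpow[symmetric] powr_powr)
    moreover have "(2 powr (1 - \<gamma> - a))^k = 2 powr (real k * (1 - \<gamma> - a))"
      by (simp add: powr_power)
    moreover have "2 powr (real k * (1 - \<gamma>)) / 2 powr (real k * a) = 2 powr (real k * (1 - \<gamma> - a))"
      by (simp add: powr_diff[symmetric] algebra_simps)
    moreover have "(real (2^k) powr (1 - \<gamma>) / (1 - \<gamma>)) / 2 powr (real k * a)
      = (real (2^k) powr (1 - \<gamma>) / 2 powr (real k * a)) / (1 - \<gamma>)" by simp
    ultimately show ?thesis by metis
  qed
  finally show ?thesis .
qed


lemma P2:
  assumes a: "1 - \<gamma> < a"
  shows "AE \<omega> in M. \<exists>M0. \<forall>m\<ge>M0. real (card {n\<in>{1..m}. 1 \<le> Z n \<omega>}) \<le> (2 * real m) powr a"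
proof -
  define A where "A k = {\<omega>\<in>space M. 2 powr (real k * a) \<le> U (2^k) \<omega>}" for k
  have Ameas: "A k \<in> events" for k
  proof -
    have "U (2^k) \<in> borel_measurable M" using U_int(1) by (rule borel_measurable_integrable)
    then show ?thesis unfolding A_def by measurable
  qed
  define q where "q = 2 powr (1 - \<gamma> - a)"
  have q: "0 < q" "q < 1" unfolding q_def using a by (auto simp: powr_less_one)
  have "summable (\<lambda>k. q^k / (1 - \<gamma>))" using q by (intro summable_divide summable_geometric) auto
  then have "summable (\<lambda>k. prob (A k))"
    by (rule summable_comparison_test'[of _ 0]) (use markov_k[OF a] in \<open>auto simp: A_def q_def\<close>)
  then have "AE \<omega> in M. finite {k. \<omega> \<in> A k}" by (rule bc_finite[OF Ameas])
  then show ?thesis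
  proof (rule AE_mp, intro AE_I2 impI)
    fix \<omega> assume w: "\<omega> \<in> space M" and fin: "finite {k. \<omega> \<in> A k}"
    obtain K where K: "{k. \<omega> \<in> A k} \<subseteq> {..<K}" using finite_nat_bounded[OF fin] by auto
    have Kb: "U (2^k) \<omega> < 2 powr (real k * a)" if "K \<le> k" for k
    proof (rule ccontr)
      assume "\<not> ?thesis"
      then have "k \<in> {k. \<omega> \<in> A k}" using w unfolding A_def by auto
      then show False using K that by auto
    qed
    show "\<exists>M0. \<forall>m\<ge>M0. real (card {n\<in>{1..m}. 1 \<le> Z n \<omega>}) \<le> (2 * real m) powr a"
    proof (intro exI allI impI)
      fix m :: nat assume m: "2^K + 1 \<le> m"
      define k where "k = (LEAST k. m \<le> 2^k)"
      have ex: "m \<le> 2^m" by (simp add: less_imp_le)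
      have mk: "m \<le> 2^k" unfolding k_def by (rule LeastI[of _ m]) (rule ex)
      have km: "2^k \<le> 2 * m"
      proof (cases k)
        case 0 then show ?thesis using m by simp
      next
        case (Suc j)
        have "j < k" using Suc by simp
        then have "\<not> m \<le> 2^j" using not_less_Least[of j "\<lambda>k. m \<le> 2^k"] unfolding k_def by blast
        then show ?thesis using Suc by simp
      qed
      have Kk: "K \<le> k"
      proof (rule ccontr)
        assume "\<not> K \<le> k"
        then have "(2::nat)^k \<le> 2^K" by (intro power_increasing) auto
        then show False using mk m by linarith
      qed
      have "real (card {n\<in>{1..m}. 1 \<le> Z n \<omega>}) = U m \<omega>" using U_card[OF w] by simp
      also have "\<dots> \<le> U (2^k) \<omega>" using U_mono[OF w mk] .
      also have "\<dots> < 2 powr (real k * a)" using Kb[OF Kk] .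
      also have "\<dots> = real (2^k) powr a"
        by (simp add: powr_realpow[symmetric] powr_powr)
      also have "\<dots> \<le> (2 * real m) powr a"
      proof -
        have "real (2^k) \<le> real (2 * m)" using km by (simp only: of_nat_le_iff)
        then have "real (2^k) \<le> 2 * real m" by simp
        then show ?thesis using a g1 by (intro powr_mono2) auto
      qed
      finally show "real (card {n\<in>{1..m}. 1 \<le> Z n \<omega>}) \<le> (2 * real m) powr a" by simp
    qed
  qed
qed

end

lemma det:
  fixes z :: "nat \<Rightarrow> nat" and a b e e' :: real
  assumes inf: "\<forall>n. \<exists>m>n. 1 \<le> z m"
    and bnd: "\<forall>m\<ge>M0. real (card {n\<in>{1..m}. 1 \<le> z n}) \<le> (2 * real m) powr a"
    and fin: "finite {m. 1 \<le> m \<and> 1 \<le> z m \<and> (\<exists>m'. m < m' \<and> m' < m + nat \<lceil>(2 * real m) powr b\<rceil> \<and> 1 \<le> z m')}"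
    and a0: "0 < a" and e': "0 \<le> e'" "e \<le> e'" and b: "b = a * (1 + e')"
  shows "\<not> (\<exists>\<^sub>\<infinity> i. real (delta_growth_time z i) < real i powr (1 + e))"
proof -
  define t where "t = growth_time z"
  have tS: "t (Suc k) = (LEAST n. t k < n \<and> 1 \<le> z n)" for k unfolding t_def by simp
  have ex: "\<exists>n. t k < n \<and> 1 \<le> z n" for k using inf by blast
  have t_lt: "t k < t (Suc k)" and t_z: "1 \<le> z (t (Suc k))" for k
    using LeastI_ex[OF ex[of k]] unfolding tS[symmetric] by auto
  have t_gap: "z n < 1" if "t k < n" "n < t (Suc k)" for k n
    using not_less_Least[of n "\<lambda>n. t k < n \<and> 1 \<le> z n"] that unfolding tS[symmetric] by auto
  have smono: "strict_mono t" by (rule strict_monoI_Suc) (rule t_lt)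
  have t_ge: "k \<le> t k" for k using smono by (rule strict_mono_imp_increasing)
  have t_card: "card {n\<in>{1..t k}. 1 \<le> z n} = k" for k
  proof (induction k)
    case 0 then show ?case by (simp add: t_def)
  next
    case (Suc k)
    have "{n\<in>{1..t (Suc k)}. 1 \<le> z n} = insert (t (Suc k)) {n\<in>{1..t k}. 1 \<le> z n}"
    proof (intro set_eqI iffI)
      fix n assume n: "n \<in> {n\<in>{1..t (Suc k)}. 1 \<le> z n}"
      show "n \<in> insert (t (Suc k)) {n\<in>{1..t k}. 1 \<le> z n}"
      proof (cases "n \<le> t k")
        case True then show ?thesis using n by auto
      next
        case False
        then show ?thesis using n t_gap[of k n] by (cases "n = t (Suc k)") auto
      qed
    next
      fix n assume "n \<in> insert (t (Suc k)) {n\<in>{1..t k}. 1 \<le> z n}"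
      then show "n \<in> {n\<in>{1..t (Suc k)}. 1 \<le> z n}"
        using t_z[of k] t_lt[of k] t_ge[of "Suc k"] by auto
    qed
    moreover have "t (Suc k) \<notin> {n\<in>{1..t k}. 1 \<le> z n}" using t_lt[of k] by auto
    ultimately show ?case using Suc by simp
  qed
  define F where "F = {m. 1 \<le> m \<and> 1 \<le> z m \<and> (\<exists>m'. m < m' \<and> m' < m + nat \<lceil>(2 * real m) powr b\<rceil> \<and> 1 \<le> z m')}"
  have sub: "{i. real (delta_growth_time z i) < real i powr (1 + e)} \<subseteq> {..<Suc M0} \<union> t -` F"
  proof
    fix i assume i: "i \<in> {i. real (delta_growth_time z i) < real i powr (1 + e)}"
    show "i \<in> {..<Suc M0} \<union> t -` F"
    proof (cases "i \<le> M0 \<or> t i < M0")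
      case True
      then have "i < Suc M0" using t_ge[of i] by linarith
      then show ?thesis by simp
    next
      case False
      then have i1: "1 \<le> i" and tM: "M0 \<le> t i" by auto
      obtain j where j: "i = Suc j" using i1 by (cases i) auto
      define m where "m = t i"
      have m1: "1 \<le> m" using t_ge[of i] i1 unfolding m_def by simp
      have zm: "1 \<le> z m" unfolding m_def j by (rule t_z)
      have "real (card {n\<in>{1..m}. 1 \<le> z n}) \<le> (2 * real m) powr a"
        using bnd tM unfolding m_def by blast
      then have ib: "real i \<le> (2 * real m) powr a"
        using t_card[of i] unfolding m_def by simp
      have "real (t (Suc i) - m) = real (delta_growth_time z i)"
        unfolding delta_growth_time_def t_def m_def by simp
      also have "\<dots> < real i powr (1 + e)" using i by simp
      also have "\<dots> \<le> real i powr (1 + e')" using i1 e' by (intro powr_mono) auto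
      also have "\<dots> \<le> ((2 * real m) powr a) powr (1 + e')" using ib i1 e' by (intro powr_mono2) auto
      also have "\<dots> = (2 * real m) powr b" unfolding b by (simp add: powr_powr)
      also have "\<dots> \<le> of_int \<lceil>(2 * real m) powr b\<rceil>" by simp
      finally have "real (t (Suc i) - m) < of_int \<lceil>(2 * real m) powr b\<rceil>" .
      then have "t (Suc i) - m < nat \<lceil>(2 * real m) powr b\<rceil>" by linarith
      moreover have "m < t (Suc i)" unfolding m_def by (rule t_lt)
      ultimately have "m \<in> F" unfolding F_def using m1 zm t_z[of i] by auto
      then show ?thesis unfolding m_def by auto
    qed
  qed
  have "finite (t -` F)" using fin unfolding F_def[symmetric]
    by (rule finite_vimageI) (use smono strict_mono_imp_inj_on in auto)
  then have "finite {i. real (delta_growth_time z i) < real i powr (1 + e)}"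
    using sub by (meson finite_Un finite_lessThan finite_subset)
  then show ?thesis by (simp add: INFM_iff_infinite)
qed


theorem lemma4p2:
  fixes M :: "'a measure" and Z :: "nat \<Rightarrow> 'a \<Rightarrow> nat"
    and \<gamma> \<epsilon> :: real
  assumes "prob_space M"
    and "2/3 < \<gamma>" and "\<gamma> < 1"
    and "prob_space.indep_vars M (\<lambda>_. count_space UNIV) Z {1..}"
    and "\<And>n. 1 \<le> n \<Longrightarrow>
           distr M (count_space UNIV) (Z n) = measure_pmf (ber_nat (real n powr (-\<gamma>)))"
    and "\<epsilon> < \<gamma> / (1 - \<gamma>) - 2"
  shows "AE \<omega> in M. \<not> (\<exists>\<^sub>\<infinity> i.
           real (delta_growth_time (\<lambda>n. Z n \<omega>) i) < real i powr (1 + \<epsilon>))"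
proof -
  have T: "tbrw M Z \<gamma>"
  proof (rule tbrw.intro[OF assms(1)], rule tbrw_axioms.intro)
    show "0 < \<gamma>" using assms(2) by linarith
    show "\<gamma> < 1" by (rule assms(3))
    show "prob_space.indep_vars M (\<lambda>_. count_space UNIV) Z {1..}" by (rule assms(4))
    show "\<And>n. 1 \<le> n \<Longrightarrow> distr M (count_space UNIV) (Z n) = measure_pmf (ber_nat (real n powr (-\<gamma>)))"
      by (rule assms(5))
  qed
  interpret tbrw M Z \<gamma> by (rule T)
  define e' where "e' = max \<epsilon> 0"
  have e'0: "0 \<le> e'" "\<epsilon> \<le> e'" unfolding e'_def by auto
  have g1': "0 < 1 - \<gamma>" using assms(3) by simp
  have key: "(1 + e') * (1 - \<gamma>) < 2 * \<gamma> - 1"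
  proof (cases "\<epsilon> \<le> 0")
    case True
    then have "e' = 0" unfolding e'_def by auto
    then show ?thesis using assms(2) by simp
  next
    case False
    then have "e' = \<epsilon>" unfolding e'_def by auto
    have "1 + \<epsilon> < \<gamma> / (1 - \<gamma>) - 1" using assms(6) by simp
    then have "(1 + \<epsilon>) * (1 - \<gamma>) < (\<gamma> / (1 - \<gamma>) - 1) * (1 - \<gamma>)"
      using g1' by (intro mult_strict_right_mono) auto
    also have "\<dots> = 2 * \<gamma> - 1" using g1' by (simp add: field_simps)
    finally show ?thesis using \<open>e' = \<epsilon>\<close> by simp
  qed
  define a where "a = ((1 - \<gamma>) + (2 * \<gamma> - 1) / (1 + e')) / 2"
  have pe: "0 < 1 + e'" using e'0 by simp
  have q: "1 - \<gamma> < (2 * \<gamma> - 1) / (1 + e')"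
    using key pe by (simp add: pos_less_divide_eq mult.commute)
  have a1: "1 - \<gamma> < a" unfolding a_def using q by simp
  have a0: "0 < a" using a1 g1' by simp
  define b where "b = a * (1 + e')"
  have b0: "0 \<le> b" unfolding b_def using a0 pe by simp
  have "b = ((1 - \<gamma>) * (1 + e') + (2 * \<gamma> - 1)) / 2"
    unfolding b_def a_def using pe by (simp add: field_simps)
  then have b1: "b - 2 * \<gamma> < -1" using key by (simp add: algebra_simps)
  have AE1: "AE \<omega> in M. \<forall>n. \<exists>m>n. 1 \<le> Z m \<omega>" by (rule inf_growth)
  have AE2: "AE \<omega> in M. \<exists>M0. \<forall>m\<ge>M0. real (card {n\<in>{1..m}. 1 \<le> Z n \<omega>}) \<le> (2 * real m) powr a"
    by (rule P2[OF a1])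
  have AE3: "AE \<omega> in M. finite {m. 1 \<le> m \<and> \<omega> \<in> Bset b m}" by (rule P3[OF b0 b1])
  show ?thesis
    using AE1 AE2 AE3 AE_space
  proof (eventually_elim)
    case (elim \<omega>)
    then have w: "\<omega> \<in> space M" by simp
    from elim obtain M0 where M0: "\<forall>m\<ge>M0. real (card {n\<in>{1..m}. 1 \<le> Z n \<omega>}) \<le> (2 * real m) powr a"
      by blast
    have eqF: "{m. 1 \<le> m \<and> 1 \<le> Z m \<omega> \<and> (\<exists>m'. m < m' \<and> m' < m + nat \<lceil>(2 * real m) powr b\<rceil> \<and> 1 \<le> Z m' \<omega>)}
       = {m. 1 \<le> m \<and> \<omega> \<in> Bset b m}"
      using w unfolding Bset_def by auto
    have fin: "finite {m. 1 \<le> m \<and> 1 \<le> Z m \<omega> \<and> (\<exists>m'. m < m' \<and> m' < m + nat \<lceil>(2 * real m) powr b\<rceil> \<and> 1 \<le> Z m' \<omega>)}"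
      unfolding eqF using elim by simp
    have inf: "\<forall>n. \<exists>m>n. 1 \<le> Z m \<omega>" using elim by simp
    show ?case
      by (rule det[where z="\<lambda>n. Z n \<omega>", OF inf M0 fin a0 e'0 b_def])
  qed
qed

end
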